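(* There is an algorithm that, given as input a PIA $\mathcal{P}$ and a trajectory $T=\langle (t_0,x_0,y_0),\dots,(t_n,x_n,y_n)\rangle$, returns the stops of $T$ with respect to $\mathcal{P}$, and runs in time $O(n\cdot p)$, where $p$ is the complexity of answering the point query for $\mathcal{P}$.
   Context: A trajectory is a list $\langle (t_0,x_0,y_0),\dots,(t_n,x_n,y_n)\rangle$ of points of $\mathbb{R}^3$ (time, then planar coordinates) with $t_0<t_1<\dots<t_n$ (coordinates may be assumed rational). A place of interest (PoI) is a pair $C=(R_C,\Delta_C)$ where $R_C\subseteq\mathbb{R}^2$ is a topologically closed polygon, polyline or point (the geometry of $C$) and $\Delta_C>0$ is a real number (its minimum duration). A PIA (places of interest of an application) is a finite collection $\mathcal{P}=\{C_1,\dots,C_N\}$ of PoIs with mutually disjoint geometries. A stop of $T$ with respect to $\mathcal{P}$ is a maximal contiguous subtrajectory $\langle (t_i,x_i,y_i),\dots,(t_{i+\ell},x_{i+\ell},y_{i+\ell})\rangle$ of $T$ such that for some $k\in\{1,\dots,N\}$: (a) $(x_{i+j},y_{i+j})\in R_{C_k}$ for all $j=0,\dots,\ell$, and (b) $t_{i+\ell}-t_i>\Delta_{C_k}$. The point query for $\mathcal{P}$ is the problem: given a point $(x,y)\in\mathbb{R}^2$, determine which geometry $R_{C_k}$ of $\mathcal{P}$ (if any) contains $(x,y)$. *)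

theory Defs
  imports "HOL-Analysis.Analysis"
begin

type_synonym point2 = "real \<times> real"
type_synonym traj = "(real \<times> real \<times> real) list"
type_synonym poi = "point2 set \<times> real"              (* (R_C, Delta_C) *)

definition tm :: "real \<times> real \<times> real \<Rightarrow> real" where
  "tm q = fst q"

definition pos :: "real \<times> real \<times> real \<Rightarrow> point2" where
  "pos q = snd q"

definition is_trajectory :: "traj \<Rightarrow> bool" where
  "is_trajectory T \<longleftrightarrow> T \<noteq> [] \<and> sorted_wrt (\<lambda>a b. tm a < tm b) T"

definition polyline_set :: "point2 list \<Rightarrow> point2 set" where
  "polyline_set vs = (\<Union>i < length vs - 1. closed_segment (vs ! i) (vs ! Suc i))"

definition is_polyline :: "point2 set \<Rightarrow> bool" where
  "is_polyline R \<longleftrightarrow> (\<exists>vs. length vs \<ge> 2 \<and> R = polyline_set vs)"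

definition is_polygon :: "point2 set \<Rightarrow> bool" where
  "is_polygon R \<longleftrightarrow> (\<exists>vs g. length vs \<ge> 4 \<and> hd vs = last vs \<and>
      simple_path g \<and> pathfinish g = pathstart g \<and> path_image g = polyline_set vs \<and>
      R = polyline_set vs \<union> inside (polyline_set vs))"

definition is_point_geom :: "point2 set \<Rightarrow> bool" where
  "is_point_geom R \<longleftrightarrow> (\<exists>z. R = {z})"

definition is_poi :: "poi \<Rightarrow> bool" where
  "is_poi C \<longleftrightarrow> closed (fst C) \<and>
     (is_polygon (fst C) \<or> is_polyline (fst C) \<or> is_point_geom (fst C)) \<and> snd C > 0"

definition is_pia :: "poi list \<Rightarrow> bool" where
  "is_pia P \<longleftrightarrow> (\<forall>C \<in> set P. is_poi C) \<and>
     (\<forall>k < length P. \<forall>l < length P. k \<noteq> l \<longrightarrow> fst (P ! k) \<inter> fst (P ! l) = {})"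

definition stop_cond :: "poi list \<Rightarrow> traj \<Rightarrow> nat \<Rightarrow> nat \<Rightarrow> nat \<Rightarrow> bool" where
  "stop_cond P T i j k \<longleftrightarrow> i \<le> j \<and> j < length T \<and> k < length P \<and>
     (\<forall>m \<in> {i..j}. pos (T ! m) \<in> fst (P ! k)) \<and>
     tm (T ! j) - tm (T ! i) > snd (P ! k)"

definition is_stop :: "poi list \<Rightarrow> traj \<Rightarrow> nat \<Rightarrow> nat \<Rightarrow> bool" where
  "is_stop P T i j \<longleftrightarrow> (\<exists>k. stop_cond P T i j k) \<and>
     \<not> (\<exists>i' j' k'. i' \<le> i \<and> j \<le> j' \<and> (i', j') \<noteq> (i, j) \<and> stop_cond P T i' j' k')"

definition point_query_oracle :: "poi list \<Rightarrow> (point2 \<Rightarrow> nat option) \<Rightarrow> bool" where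
  "point_query_oracle P q \<longleftrightarrow> (\<forall>z.
     (\<forall>k. q z = Some k \<longleftrightarrow> (k < length P \<and> z \<in> fst (P ! k))))"

text \<open>The scan algorithm, with explicit cost accounting: each point query costs p,
  every other elementary step costs 1.  State: current candidate (start index,
  start time, PoI index) and the last processed (index, time).\<close>
definition close_cand :: "poi list \<Rightarrow> (nat \<times> real \<times> nat) option \<Rightarrow> nat \<times> real \<Rightarrow> (nat \<times> nat) list" where
  "close_cand P cur lst = (case cur of None \<Rightarrow> []
     | Some (s, ts, k) \<Rightarrow> if snd lst - ts > snd (P ! k) then [(s, fst lst)] else [])"

fun stops_go :: "(point2 \<Rightarrow> nat option) \<Rightarrow> poi list \<Rightarrow> nat \<Rightarrow> nat \<Rightarrow>
    (nat \<times> real \<times> nat) option \<Rightarrow> nat \<times> real \<Rightarrow> traj \<Rightarrow> (nat \<times> nat) list \<times> nat" where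
  "stops_go q P p i cur lst [] = (close_cand P cur lst, 1)"
| "stops_go q P p i cur lst ((t, x, y) # rest) =
     (let r = q (x, y) in
      if cur \<noteq> None \<and> r = Some (snd (snd (the cur))) then
        (let (res, c) = stops_go q P p (Suc i) cur (i, t) rest in (res, c + p + 1))
      else
        (let out = close_cand P cur lst;
             cur' = map_option (\<lambda>k. (i, t, k)) r;
             (res, c) = stops_go q P p (Suc i) cur' (i, t) rest
         in (out @ res, c + p + 2)))"

definition stops_alg :: "(point2 \<Rightarrow> nat option) \<Rightarrow> poi list \<Rightarrow> nat \<Rightarrow> traj \<Rightarrow> (nat \<times> nat) list \<times> nat" where
  "stops_alg q P p T = stops_go q P p 0 None (0, 0) T"

end

theory Submission
  imports Defs
begin

definition runout :: "(nat \<Rightarrow> nat option) \<Rightarrow> (nat \<Rightarrow> real) \<Rightarrow> (nat \<Rightarrow> real) \<Rightarrow> nat \<Rightarrow> (nat\<times>nat) set" where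
  "runout lab tt D n = {(s,e). \<exists>k. s \<le> e \<and> e < n \<and> (\<forall>m\<in>{s..e}. lab m = Some k) \<and>
      (s = 0 \<or> lab (s-1) \<noteq> Some k) \<and> (Suc e = n \<or> lab (Suc e) \<noteq> Some k) \<and> tt e - tt s > D k}"

lemma run_close:
  assumes "s < i" "i \<le> n" "\<forall>m\<in>{s..<i}. lab m = Some k" "s = 0 \<or> lab (s-1) \<noteq> Some k"
    "i = n \<or> lab i \<noteq> Some k"
  shows "{(s',e) \<in> runout lab tt D n. s' = s} = (if tt (i-1) - tt s > D k then {(s, i-1)} else {})"
proof -
  have "(s,e) \<in> runout lab tt D n \<longleftrightarrow> e = i-1 \<and> tt (i-1) - tt s > D k" for e
  proof
    assume "(s,e) \<in> runout lab tt D n"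
    then obtain k' where h: "s \<le> e" "e < n" "\<forall>m\<in>{s..e}. lab m = Some k'" "s = 0 \<or> lab (s-1) \<noteq> Some k'"
      "Suc e = n \<or> lab (Suc e) \<noteq> Some k'" "tt e - tt s > D k'" unfolding runout_def by blast
    have "lab s = Some k'" using h(1,3) by auto
    moreover have "lab s = Some k" using assms(1,3) by auto
    ultimately have kk: "k' = k" by simp
    have "e = i-1"
    proof (rule ccontr)
      assume ne: "e \<noteq> i-1"
      show False
      proof (cases "e < i-1")
        case True then have "lab (Suc e) = Some k" using assms(3) h(1) by auto
        moreover have "Suc e \<noteq> n" using True assms(2) by auto
        ultimately show False using h(5) kk by auto
      next
        case False then have ie: "i \<le> e" using ne by auto
        then have "lab i = Some k" using h(3) kk assms(1) by auto
        moreover have "i \<noteq> n" using ie h(2) by auto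
        ultimately show False using assms(5) by auto
      qed
    qed
    then show "e = i-1 \<and> tt (i-1) - tt s > D k" using h kk by auto
  next
    assume a: "e = i-1 \<and> tt (i-1) - tt s > D k"
    have "Suc (i-1) = i" using assms(1) by auto
    then show "(s,e) \<in> runout lab tt D n" unfolding runout_def using assms a
      by (auto intro!: exI[of _ k])
  qed
  then show ?thesis by auto
qed

lemma drop_cons:
  assumes "drop i xs = a # rest"
  shows "i < length xs \<and> xs ! i = a \<and> drop (Suc i) xs = rest"
proof -
  have "i < length xs" using assms by (metis drop_all list.distinct(1) not_le)
  moreover have "xs ! i = a" using assms calculation by (metis Cons_nth_drop_Suc list.inject)
  moreover have "drop (Suc i) xs = rest" using assms calculation by (metis Cons_nth_drop_Suc list.inject)
  ultimately show ?thesis by blast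
qed

lemma cost: "snd (stops_go q P p i cur lst rest) \<le> length rest * (p+2) + 1"
proof (induction rest arbitrary: i cur lst)
  case Nil
  then show ?case by simp
next
  case (Cons a rest)
  obtain t x y where a: "a = (t,x,y)" by (cases a) auto
  show ?case
  proof (cases "cur \<noteq> None \<and> q (x,y) = Some (snd (snd (the cur)))")
    case True
    obtain res c where rc: "stops_go q P p (Suc i) cur (i,t) rest = (res, c)" by fastforce
    have "c \<le> length rest * (p+2) + 1" using Cons.IH[of "Suc i" cur "(i,t)"] rc by simp
    then show ?thesis using rc unfolding a stops_go.simps Let_def if_P[OF True] by simp
  next
    case False
    obtain res c where rc: "stops_go q P p (Suc i) (map_option (\<lambda>k. (i, t, k)) (q (x,y))) (i,t) rest = (res, c)" by fastforce
    have "c \<le> length rest * (p+2) + 1" using Cons.IH[of "Suc i" _ "(i,t)"] rc by (metis snd_conv)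
    then show ?thesis using rc unfolding a stops_go.simps Let_def if_not_P[OF False] by simp
  qed
qed


lemma go:
  fixes T :: traj and q :: "point2 \<Rightarrow> nat option" and P :: "poi list"
  defines lab_def: "lab \<equiv> \<lambda>m. q (pos (T!m))" and tt_def: "tt \<equiv> \<lambda>m. tm (T!m)"
    and Out_def: "Out \<equiv> runout (\<lambda>m. q (pos (T!m))) (\<lambda>m. tm (T!m)) (\<lambda>k. snd (P!k)) (length T)"
  assumes "drop i T = rest" "i \<le> length T"
    and "case cur of None \<Rightarrow> (i = 0 \<or> lab (i-1) = None)
         | Some (s,ts,k) \<Rightarrow> s < i \<and> ts = tt s \<and> (\<forall>m\<in>{s..<i}. lab m = Some k) \<and> (s = 0 \<or> lab (s-1) \<noteq> Some k)"
    and "0 < i \<Longrightarrow> lst = (i-1, tt (i-1))"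
  shows "set (fst (stops_go q P p i cur lst rest)) = {(s',e)\<in>Out. i \<le> s'} \<union>
     (case cur of None \<Rightarrow> {} | Some (s,_,_) \<Rightarrow> {(s',e)\<in>Out. s' = s})"
  using assms(4-)
proof (induction rest arbitrary: i cur lst)
  case Nil
  have Out_eq: "Out = runout lab tt (\<lambda>k. snd (P!k)) (length T)" unfolding Out_def lab_def tt_def ..
  from Nil have iT: "i = length T" by (metis drop_eq_Nil le_antisym)
  have e: "{(s',e)\<in>Out. i \<le> s'} = {}" unfolding Out_eq runout_def using iT by auto
  show ?case
  proof (cases cur)
    case None
    then show ?thesis unfolding e by (simp add: close_cand_def)
  next
    case (Some c)
    then obtain s ts k where c: "cur = Some (s,ts,k)" by (cases c) auto
    have inv: "s < i" "ts = tt s" "\<forall>m\<in>{s..<i}. lab m = Some k" "s = 0 \<or> lab (s-1) \<noteq> Some k"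
      using Nil(3) c by auto
    have lst: "lst = (i-1, tt (i-1))" using Nil(4) inv(1) by auto
    have "{(s',e)\<in>Out. s' = s} = (if tt (i-1) - tt s > snd (P!k) then {(s, i-1)} else {})"
      unfolding Out_eq by (rule run_close) (use inv iT in auto)
    then show ?thesis unfolding e using c lst inv(2) by (simp add: close_cand_def)
  qed
next
  case (Cons a rest)
  have Out_eq: "Out = runout lab tt (\<lambda>k. snd (P!k)) (length T)" unfolding Out_def lab_def tt_def ..
  obtain t x y where a: "a = (t,x,y)" by (cases a) auto
  from drop_cons[OF Cons.prems(1)] have iT: "i < length T" and Ti: "T ! i = a"
    and dr: "drop (Suc i) T = rest" by auto
  have labi: "lab i = q (x,y)" unfolding lab_def using Ti a by (simp add: pos_def)
  have tti: "tt i = t" unfolding tt_def using Ti a by (simp add: tm_def)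
  have noi: "{(s',e)\<in>Out. s' = i} = {}" if "\<And>k. lab i = Some k \<Longrightarrow> 0 < i \<and> lab (i-1) = Some k"
  proof -
    { fix e assume "(i,e) \<in> Out"
      then obtain k where "i \<le> e" "\<forall>m\<in>{i..e}. lab m = Some k" "i = 0 \<or> lab (i-1) \<noteq> Some k"
        unfolding Out_eq runout_def by blast
      then have False using that[of k] by auto }
    then show ?thesis by auto
  qed
  show ?case
  proof (cases "cur \<noteq> None \<and> q (x,y) = Some (snd (snd (the cur)))")
    case True
    then obtain s ts k where c: "cur = Some (s,ts,k)" and qk: "q (x,y) = Some k" by auto
    have inv: "s < i" "ts = tt s" "\<forall>m\<in>{s..<i}. lab m = Some k" "s = 0 \<or> lab (s-1) \<noteq> Some k"
      using Cons.prems(3) c by auto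
    have IH: "set (fst (stops_go q P p (Suc i) cur (i,t) rest)) = {(s',e)\<in>Out. Suc i \<le> s'} \<union> {(s',e)\<in>Out. s' = s}"
    proof -
      have all: "\<forall>m\<in>{s..<Suc i}. lab m = Some k" using inv(3) labi qk by (auto simp: less_Suc_eq)
      have p2: "case cur of None \<Rightarrow> (Suc i = 0 \<or> lab (Suc i-1) = None)
         | Some (s,ts,k) \<Rightarrow> s < Suc i \<and> ts = tt s \<and> (\<forall>m\<in>{s..<Suc i}. lab m = Some k) \<and> (s = 0 \<or> lab (s-1) \<noteq> Some k)"
        using c inv all by auto
      have p3: "0 < Suc i \<Longrightarrow> (i,t) = (Suc i - 1, tt (Suc i - 1))" using tti by simp
      show ?thesis using Cons.IH[OF dr _ p2 p3] iT c by simp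
    qed
    have "lab (i-1) = Some k" using inv by auto
    then have "{(s',e)\<in>Out. s' = i} = {}" using noi labi qk inv(1) by auto
    then have "{(s',e)\<in>Out. i \<le> s'} = {(s',e)\<in>Out. Suc i \<le> s'}"
      by (auto simp: le_eq_less_or_eq Suc_le_eq)
    moreover have "fst (stops_go q P p i cur lst (a # rest)) = fst (stops_go q P p (Suc i) cur (i,t) rest)"
      unfolding a stops_go.simps Let_def if_P[OF True] by (simp add: case_prod_beta)
    ultimately show ?thesis using IH c by simp
  next
    case False
    define cur' where "cur' = map_option (\<lambda>k. (i, t, k)) (q (x,y))"
    have inv': "case cur' of None \<Rightarrow> (Suc i = 0 \<or> lab (Suc i - 1) = None)
         | Some (s,ts,k) \<Rightarrow> s < Suc i \<and> ts = tt s \<and> (\<forall>m\<in>{s..<Suc i}. lab m = Some k) \<and> (s = 0 \<or> lab (s-1) \<noteq> Some k)"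
    proof (cases "q (x,y)")
      case None then show ?thesis using labi by (simp add: cur'_def)
    next
      case (Some k)
      have "i = 0 \<or> lab (i-1) \<noteq> Some k"
      proof (cases cur)
        case None then show ?thesis using Cons.prems(3) by auto
      next
        case (Some c)
        then obtain s ts k' where c: "cur = Some (s,ts,k')" by (cases c) auto
        have "k \<noteq> k'" using False c \<open>q (x,y) = Some k\<close> by auto
        moreover have "lab (i-1) = Some k'" using Cons.prems(3) c by auto
        ultimately show ?thesis by auto
      qed
      then show ?thesis using Some labi tti by (auto simp: cur'_def less_Suc_eq_le)
    qed
    have IH: "set (fst (stops_go q P p (Suc i) cur' (i,t) rest)) = {(s',e)\<in>Out. Suc i \<le> s'} \<union>
       (case cur' of None \<Rightarrow> {} | Some (s,_,_) \<Rightarrow> {(s',e)\<in>Out. s' = s})"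
      using Cons.IH[OF dr _ inv', of "(i,t)"] iT tti by simp
    have out: "set (close_cand P cur lst) = (case cur of None \<Rightarrow> {} | Some (s,_,_) \<Rightarrow> {(s',e)\<in>Out. s' = s})"
    proof (cases cur)
      case None then show ?thesis by (simp add: close_cand_def)
    next
      case (Some c)
      then obtain s ts k where c: "cur = Some (s,ts,k)" by (cases c) auto
      have inv: "s < i" "ts = tt s" "\<forall>m\<in>{s..<i}. lab m = Some k" "s = 0 \<or> lab (s-1) \<noteq> Some k"
        using Cons.prems(3) c by auto
      have lst: "lst = (i-1, tt (i-1))" using Cons.prems(4) inv(1) by auto
      have "lab i \<noteq> Some k" using False c labi by auto
      then have "{(s',e)\<in>Out. s' = s} = (if tt (i-1) - tt s > snd (P!k) then {(s, i-1)} else {})"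
        unfolding Out_eq by (intro run_close) (use inv iT in auto)
      then show ?thesis using c lst inv(2) by (simp add: close_cand_def)
    qed
    have c'case: "(case cur' of None \<Rightarrow> {} | Some (s,_,_) \<Rightarrow> {(s',e)\<in>Out. s' = s}) = {(s',e)\<in>Out. s' = i}"
    proof (cases "q (x,y)")
      case None
      have "{(s',e)\<in>Out. s' = i} = {}" using noi labi None by auto
      then show ?thesis using None by (simp add: cur'_def)
    next
      case (Some k) then show ?thesis by (simp add: cur'_def)
    qed
    have split: "{(s',e)\<in>Out. i \<le> s'} = {(s',e)\<in>Out. Suc i \<le> s'} \<union> {(s',e)\<in>Out. s' = i}"
      by auto
    have "set (fst (stops_go q P p i cur lst (a # rest))) =
        set (close_cand P cur lst) \<union> set (fst (stops_go q P p (Suc i) cur' (i,t) rest))"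
      unfolding a stops_go.simps Let_def if_not_P[OF False] cur'_def by (simp add: case_prod_beta)
    then show ?thesis using IH out c'case split by auto
  qed
qed


lemma out_stops:
  assumes pia: "is_pia P" and tr: "is_trajectory T" and orc: "point_query_oracle P q"
  shows "runout (\<lambda>m. q (pos (T!m))) (\<lambda>m. tm (T!m)) (\<lambda>k. snd (P!k)) (length T) = {(i,j). is_stop P T i j}"
proof -
  have lab: "q z = Some k \<longleftrightarrow> k < length P \<and> z \<in> fst (P!k)" for z k
    using orc unfolding point_query_oracle_def by blast
  have mono: "tm (T!a) < tm (T!b)" if "a < b" "b < length T" for a b
    using tr that unfolding is_trajectory_def by (metis sorted_wrt_nth_less)
  have disj: "k = l" if "k < length P" "l < length P" "z \<in> fst (P!k)" "z \<in> fst (P!l)" for k l z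
    using pia that unfolding is_pia_def by blast
  show ?thesis
  proof (intro set_eqI iffI)
    fix se assume "se \<in> runout (\<lambda>m. q (pos (T!m))) (\<lambda>m. tm (T!m)) (\<lambda>k. snd (P!k)) (length T)"
    then obtain s e k where se: "se = (s,e)" and h: "s \<le> e" "e < length T" "\<forall>m\<in>{s..e}. q (pos (T!m)) = Some k"
      "s = 0 \<or> q (pos (T!(s-1))) \<noteq> Some k" "Suc e = length T \<or> q (pos (T!(Suc e))) \<noteq> Some k"
      "tm (T!e) - tm (T!s) > snd (P!k)"
      unfolding runout_def by blast
    have kP: "k < length P" using h(1,3) lab by auto
    have "\<forall>m\<in>{s..e}. pos (T!m) \<in> fst (P!k)" using h(3) lab by blast
    then have sc: "stop_cond P T s e k" unfolding stop_cond_def using h(1,2,6) kP by simp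
    have nomax: False if "i' \<le> s" "e \<le> j'" "(i',j') \<noteq> (s,e)" "stop_cond P T i' j' k'" for i' j' k'
    proof -
      have c: "i' \<le> j'" "j' < length T" "k' < length P" "\<forall>m\<in>{i'..j'}. pos (T!m) \<in> fst (P!k')"
        using that(4) unfolding stop_cond_def by auto
      have "pos (T!s) \<in> fst (P!k')" using c(4) that(1,2) h(1) by auto
      moreover have "pos (T!s) \<in> fst (P!k)" using h(1,3) lab by auto
      ultimately have kk: "k' = k" using disj c(3) kP by blast
      show False
      proof (cases "i' < s")
        case True
        then have "s-1 \<in> {i'..j'}" using that(2) h(1) by auto
        then have "pos (T!(s-1)) \<in> fst (P!k)" using c(4) kk by blast
        then show False using h(4) True lab kP by auto
      next
        case False
        then have "e < j'" using that by auto
        then have "pos (T!(Suc e)) \<in> fst (P!k)" "Suc e \<noteq> length T" using c(4) kk that(1) h(1) c(2) by auto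
        then show False using h(5) lab kP by auto
      qed
    qed
    show "se \<in> {(i,j). is_stop P T i j}" unfolding se is_stop_def using sc nomax by blast
  next
    fix se assume "se \<in> {(i,j). is_stop P T i j}"
    then obtain s e k where se: "se = (s,e)" and sc: "stop_cond P T s e k"
      and nomax: "\<And>i' j' k'. i' \<le> s \<Longrightarrow> e \<le> j' \<Longrightarrow> (i',j') \<noteq> (s,e) \<Longrightarrow> stop_cond P T i' j' k' \<Longrightarrow> False"
      unfolding is_stop_def by blast
    have c: "s \<le> e" "e < length T" "k < length P" "\<forall>m\<in>{s..e}. pos (T!m) \<in> fst (P!k)"
      "tm (T!e) - tm (T!s) > snd (P!k)"
      using sc unfolding stop_cond_def by auto
    have l: "\<forall>m\<in>{s..e}. q (pos (T!m)) = Some k" using c(3,4) lab by auto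
    have st: "s = 0 \<or> q (pos (T!(s-1))) \<noteq> Some k"
    proof (rule ccontr)
      assume a: "\<not> ?thesis"
      then have "s > 0" "pos (T!(s-1)) \<in> fst (P!k)" using lab by auto
      have "tm (T!(s-1)) < tm (T!s)" using mono[of "s-1" s] \<open>s > 0\<close> c(1,2) by auto
      have all: "\<forall>m\<in>{s-1..e}. pos (T!m) \<in> fst (P!k)"
      proof
        fix m assume "m \<in> {s-1..e}"
        then have "m = s-1 \<or> m \<in> {s..e}" by auto
        then show "pos (T!m) \<in> fst (P!k)" using c(4) \<open>pos (T!(s-1)) \<in> fst (P!k)\<close> by blast
      qed
      have "tm (T!e) - tm (T!(s-1)) > snd (P!k)" using c(5) \<open>tm (T!(s-1)) < tm (T!s)\<close> by linarith
      then have "stop_cond P T (s-1) e k" unfolding stop_cond_def using c(1,2,3) all by simp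
      moreover have "(s-1, e) \<noteq> (s, e)" using \<open>s > 0\<close> by simp
      ultimately show False using nomax[of "s-1" e k] by simp
    qed
    have en: "Suc e = length T \<or> q (pos (T!(Suc e))) \<noteq> Some k"
    proof (rule ccontr)
      assume a: "\<not> ?thesis"
      then have "Suc e < length T" "pos (T!(Suc e)) \<in> fst (P!k)" using lab c(2) by auto
      have "tm (T!e) < tm (T!Suc e)" using mono[of e "Suc e"] \<open>Suc e < length T\<close> by auto
      have all: "\<forall>m\<in>{s..Suc e}. pos (T!m) \<in> fst (P!k)"
      proof
        fix m assume "m \<in> {s..Suc e}"
        then have "m = Suc e \<or> m \<in> {s..e}" by auto
        then show "pos (T!m) \<in> fst (P!k)" using c(4) \<open>pos (T!(Suc e)) \<in> fst (P!k)\<close> by blast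
      qed
      have "tm (T!Suc e) - tm (T!s) > snd (P!k)" using c(5) \<open>tm (T!e) < tm (T!Suc e)\<close> by linarith
      then have "stop_cond P T s (Suc e) k" unfolding stop_cond_def using c(1,2,3) all \<open>Suc e < length T\<close> by simp
      moreover have "(s, Suc e) \<noteq> (s, e)" by simp
      ultimately show False using nomax[of s "Suc e" k] by simp
    qed
    show "se \<in> runout (\<lambda>m. q (pos (T!m))) (\<lambda>m. tm (T!m)) (\<lambda>k. snd (P!k)) (length T)"
      unfolding se runout_def using c l st en by blast
  qed
qed

theorem proposition2:
  "\<exists>c::nat. \<forall>(P::poi list) (T::traj) (q::point2 \<Rightarrow> nat option) (p::nat).
     is_pia P \<and> is_trajectory T \<and> point_query_oracle P q \<and> p \<ge> 1 \<longrightarrow>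
       set (fst (stops_alg q P p T)) = {(i, j). is_stop P T i j} \<and>
       snd (stops_alg q P p T) \<le> c * length T * p"
proof (intro exI[of _ 4] allI impI)
  fix P :: "poi list" and T :: traj and q :: "point2 \<Rightarrow> nat option" and p :: nat
  assume a: "is_pia P \<and> is_trajectory T \<and> point_query_oracle P q \<and> p \<ge> 1"
  have "set (fst (stops_go q P p 0 None (0,0) T)) =
     {(s',e)\<in>runout (\<lambda>m. q (pos (T!m))) (\<lambda>m. tm (T!m)) (\<lambda>k. snd (P!k)) (length T). 0 \<le> s'} \<union> {}"
    using go[where T=T and q=q and P=P and p=p and i=0 and rest=T and cur=None and lst="(0,0)"] by simp
  then have "set (fst (stops_alg q P p T)) = {(i, j). is_stop P T i j}"
    using out_stops[of P T q] a unfolding stops_alg_def by auto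
  moreover have "snd (stops_alg q P p T) \<le> 4 * length T * p"
  proof -
    have n: "length T \<ge> 1" using a unfolding is_trajectory_def by (cases T) auto
    have "snd (stops_alg q P p T) \<le> length T * (p+2) + 1" unfolding stops_alg_def by (rule cost)
    also have "\<dots> = length T * p + 2 * length T + 1" by (simp add: algebra_simps)
    also have "\<dots> \<le> length T * p + 3 * length T" using n by simp
    also have "\<dots> \<le> length T * p + 3 * (length T * p)" using a by simp
    also have "\<dots> = 4 * length T * p" by simp
    finally show ?thesis .
  qed
  ultimately show "set (fst (stops_alg q P p T)) = {(i, j). is_stop P T i j} \<and>
       snd (stops_alg q P p T) \<le> 4 * length T * p" by blast
qed

end
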